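(* Let $G$ be a connected graph. If every optimal vector coloring of $G$ is locally injective, then $G$ is a core; likewise, if every optimal strict vector coloring of $G$ is locally injective, then $G$ is a core. In particular, if $G$ is uniquely vector colorable and its unique optimal vector coloring is locally injective, then $G$ is a core.
   Context: A vector $t$-coloring of $G$ ($t\ge2$) assigns unit vectors $p_i\in\mathbb{R}^d$ to vertices with $\langle p_i,p_j\rangle\le-1/(t-1)$ for all edges $ij$; it is strict if equality holds on all edges. $\chi_v(G)$ (resp. $\chi_{sv}(G)$) is the least $t\ge2$ admitting a (resp. strict) vector $t$-coloring; an optimal (strict) vector coloring is a (strict) vector $\chi_v(G)$- (resp. $\chi_{sv}(G)$-) coloring. $G$ is uniquely vector colorable if any two optimal vector colorings have the same Gram matrix. A vector coloring is locally injective if no two distinct vertices having a common neighbor are assigned the same vector. A graph homomorphism $G\to H$ is an adjacency-preserving map $V(G)\to V(H)$; $G$ is a core if every homomorphism $G\to G$ is an automorphism (equivalently, $G$ has no homomorphism to a proper subgraph). *)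

theory Defs
  imports Complex_Main
begin

text \<open>Graphs: finite vertex set V and a symmetric irreflexive edge relation E on V.
Vectors in R^d are real lists of length d (the dimension d is arbitrary).\<close>

definition simple_graph :: "'a set \<Rightarrow> ('a \<Rightarrow> 'a \<Rightarrow> bool) \<Rightarrow> bool" where
  "simple_graph V E \<longleftrightarrow> finite V \<and> (\<forall>u v. E u v \<longrightarrow> u \<in> V \<and> v \<in> V)
     \<and> (\<forall>u v. E u v \<longrightarrow> E v u) \<and> (\<forall>v. \<not> E v v)"

definition connected_graph :: "'a set \<Rightarrow> ('a \<Rightarrow> 'a \<Rightarrow> bool) \<Rightarrow> bool" where
  "connected_graph V E \<longleftrightarrow> V \<noteq> {} \<and> (\<forall>u\<in>V. \<forall>v\<in>V. E\<^sup>*\<^sup>* u v)"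

definition vinner :: "real list \<Rightarrow> real list \<Rightarrow> real" where
  "vinner x y = (\<Sum>i<length x. x ! i * y ! i)"

definition vec_coloring :: "'a set \<Rightarrow> ('a \<Rightarrow> 'a \<Rightarrow> bool) \<Rightarrow> real \<Rightarrow> nat \<Rightarrow> ('a \<Rightarrow> real list) \<Rightarrow> bool" where
  "vec_coloring V E t d p \<longleftrightarrow> t \<ge> 2
     \<and> (\<forall>v\<in>V. length (p v) = d \<and> vinner (p v) (p v) = 1)
     \<and> (\<forall>u\<in>V. \<forall>v\<in>V. E u v \<longrightarrow> vinner (p u) (p v) \<le> - 1 / (t - 1))"

definition strict_vec_coloring :: "'a set \<Rightarrow> ('a \<Rightarrow> 'a \<Rightarrow> bool) \<Rightarrow> real \<Rightarrow> nat \<Rightarrow> ('a \<Rightarrow> real list) \<Rightarrow> bool" where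
  "strict_vec_coloring V E t d p \<longleftrightarrow> t \<ge> 2
     \<and> (\<forall>v\<in>V. length (p v) = d \<and> vinner (p v) (p v) = 1)
     \<and> (\<forall>u\<in>V. \<forall>v\<in>V. E u v \<longrightarrow> vinner (p u) (p v) = - 1 / (t - 1))"

definition chi_v :: "'a set \<Rightarrow> ('a \<Rightarrow> 'a \<Rightarrow> bool) \<Rightarrow> real" where
  "chi_v V E = (LEAST t. t \<ge> 2 \<and> (\<exists>d p. vec_coloring V E t d p))"

definition chi_sv :: "'a set \<Rightarrow> ('a \<Rightarrow> 'a \<Rightarrow> bool) \<Rightarrow> real" where
  "chi_sv V E = (LEAST t. t \<ge> 2 \<and> (\<exists>d p. strict_vec_coloring V E t d p))"

definition optimal_vec_coloring :: "'a set \<Rightarrow> ('a \<Rightarrow> 'a \<Rightarrow> bool) \<Rightarrow> nat \<Rightarrow> ('a \<Rightarrow> real list) \<Rightarrow> bool" where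
  "optimal_vec_coloring V E d p \<longleftrightarrow> vec_coloring V E (chi_v V E) d p"

definition optimal_strict_vec_coloring :: "'a set \<Rightarrow> ('a \<Rightarrow> 'a \<Rightarrow> bool) \<Rightarrow> nat \<Rightarrow> ('a \<Rightarrow> real list) \<Rightarrow> bool" where
  "optimal_strict_vec_coloring V E d p \<longleftrightarrow> strict_vec_coloring V E (chi_sv V E) d p"

definition uniquely_vec_colorable :: "'a set \<Rightarrow> ('a \<Rightarrow> 'a \<Rightarrow> bool) \<Rightarrow> bool" where
  "uniquely_vec_colorable V E \<longleftrightarrow>
     (\<forall>d p d' q. optimal_vec_coloring V E d p \<longrightarrow> optimal_vec_coloring V E d' q \<longrightarrow>
        (\<forall>u\<in>V. \<forall>v\<in>V. vinner (p u) (p v) = vinner (q u) (q v)))"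

definition locally_injective :: "'a set \<Rightarrow> ('a \<Rightarrow> 'a \<Rightarrow> bool) \<Rightarrow> ('a \<Rightarrow> real list) \<Rightarrow> bool" where
  "locally_injective V E p \<longleftrightarrow>
     (\<forall>u\<in>V. \<forall>v\<in>V. u \<noteq> v \<and> (\<exists>w\<in>V. E w u \<and> E w v) \<longrightarrow> p u \<noteq> p v)"

definition graph_hom :: "'a set \<Rightarrow> ('a \<Rightarrow> 'a \<Rightarrow> bool) \<Rightarrow> 'b set \<Rightarrow> ('b \<Rightarrow> 'b \<Rightarrow> bool) \<Rightarrow> ('a \<Rightarrow> 'b) \<Rightarrow> bool" where
  "graph_hom V E V' E' f \<longleftrightarrow> (\<forall>v\<in>V. f v \<in> V') \<and> (\<forall>u\<in>V. \<forall>v\<in>V. E u v \<longrightarrow> E' (f u) (f v))"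

definition graph_aut :: "'a set \<Rightarrow> ('a \<Rightarrow> 'a \<Rightarrow> bool) \<Rightarrow> ('a \<Rightarrow> 'a) \<Rightarrow> bool" where
  "graph_aut V E f \<longleftrightarrow> bij_betw f V V \<and> (\<forall>u\<in>V. \<forall>v\<in>V. E u v \<longleftrightarrow> E (f u) (f v))"

definition is_core :: "'a set \<Rightarrow> ('a \<Rightarrow> 'a \<Rightarrow> bool) \<Rightarrow> bool" where
  "is_core V E \<longleftrightarrow> (\<forall>f. graph_hom V E V E f \<longrightarrow> graph_aut V E f)"

end

theory Submission
  imports Defs "HOL-Library.FuncSet"
begin

definition LI :: "'a set \<Rightarrow> ('a \<Rightarrow> 'a \<Rightarrow> bool) \<Rightarrow> ('a \<Rightarrow> 'a) \<Rightarrow> bool" where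
  "LI V E f \<longleftrightarrow> (\<forall>w\<in>V. \<forall>u\<in>V. \<forall>v\<in>V. E w u \<longrightarrow> E w v \<longrightarrow> u \<noteq> v \<longrightarrow> f u \<noteq> f v)"

lemma hom_iter: "graph_hom V E V E f \<Longrightarrow> graph_hom V E V E (f^^n)"
  by (induction n) (auto simp: graph_hom_def)

lemma li_iter: "graph_hom V E V E f \<Longrightarrow> LI V E f \<Longrightarrow> LI V E (f^^n)"
proof (induction n)
  case 0 then show ?case by (simp add: LI_def)
next
  case (Suc n)
  have h: "graph_hom V E V E (f^^n)" using hom_iter Suc.prems by blast
  show ?case unfolding LI_def
  proof (intro ballI impI)
    fix w u v assume a: "w \<in> V" "u \<in> V" "v \<in> V" "E w u" "E w v" "u \<noteq> v"
    have "(f^^n) u \<noteq> (f^^n) v" using Suc.IH Suc.prems a unfolding LI_def by blast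
    moreover have "E ((f^^n) w) ((f^^n) u)" "E ((f^^n) w) ((f^^n) v)"
      "(f^^n) w \<in> V" "(f^^n) u \<in> V" "(f^^n) v \<in> V"
      using h a unfolding graph_hom_def by auto
    ultimately show "(f^^Suc n) u \<noteq> (f^^Suc n) v"
      using Suc.prems(2) unfolding LI_def by auto
  qed
qed

lemma idem_power:
  assumes fin: "finite V" and into: "\<forall>v\<in>V. f v \<in> V"
  shows "\<exists>n\<ge>1. \<forall>v\<in>V. (f^^n) ((f^^n) v) = (f^^n) v"
proof -
  have inV: "(f^^k) v \<in> V" if "v \<in> V" for k v
    using that by (induction k) (auto simp: into)
  define F where "F k = restrict (f^^k) V" for k
  have "range F \<subseteq> Pi\<^sub>E V (\<lambda>_. V)" unfolding F_def using inV by auto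
  hence "finite (range F)" using finite_PiE[of V "\<lambda>_. V"] fin finite_subset by blast
  hence "\<not> inj F" using finite_imageD infinite_UNIV_nat by blast
  then obtain a b where ab: "F a = F b" "a \<noteq> b" unfolding inj_def by blast
  obtain a b where ab: "F a = F b" "a < b"
    using ab by (metis linorder_neqE_nat)
  have eqab: "(f^^a) v = (f^^b) v" if "v \<in> V" for v
    using ab(1) that unfolding F_def by (metis restrict_apply')
  define p where "p = b - a"
  have p1: "p \<ge> 1" using ab(2) p_def by simp
  have step: "(f^^(m+p)) v = (f^^m) v" if "m \<ge> a" "v \<in> V" for m v
  proof -
    have e: "m + p = (m - a) + b" using that p_def ab(2) by simp
    have "(f^^(m+p)) v = (f^^(m-a)) ((f^^b) v)"
      unfolding e funpow_add by simp
    also have "\<dots> = (f^^(m-a)) ((f^^a) v)" using eqab that by simp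
    also have "\<dots> = (f^^((m-a)+a)) v" unfolding funpow_add by simp
    also have "\<dots> = (f^^m) v" using that by simp
    finally show ?thesis .
  qed
  have mult: "(f^^(m+q*p)) v = (f^^m) v" if "m \<ge> a" "v \<in> V" for m v q
  proof (induction q)
    case 0 then show ?case by simp
  next
    case (Suc q)
    have "(f^^(m+Suc q*p)) v = (f^^((m + q*p) + p)) v" by (simp add: algebra_simps)
    also have "\<dots> = (f^^(m + q*p)) v" using step that by simp
    finally show ?case using Suc.IH by simp
  qed
  define n where "n = (a+1)*p"
  have "n \<ge> a + 1" unfolding n_def using p1 mult_le_mono2[of 1 p "a+1"] by simp
  moreover have "\<forall>v\<in>V. (f^^n) ((f^^n) v) = (f^^n) v"
  proof
    fix v assume v: "v \<in> V"
    have "(f^^n) ((f^^n) v) = (f^^(n + (a+1)*p)) v" by (simp add: funpow_add n_def)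
    also have "\<dots> = (f^^n) v" using mult[of n v "a+1"] v \<open>n \<ge> a+1\<close> by simp
    finally show "(f^^n) ((f^^n) v) = (f^^n) v" .
  qed
  ultimately show ?thesis by (intro exI[of _ n]) auto
qed

lemma crossing:
  assumes "E\<^sup>*\<^sup>* a b" "a \<in> F" "b \<notin> F"
  shows "\<exists>y z. E y z \<and> y \<in> F \<and> z \<notin> F"
  using assms
proof (induction rule: rtranclp_induct)
  case base then show ?case by simp
next
  case (step b c)
  then show ?case by blast
qed

lemma li_hom_aut:
  assumes sg: "simple_graph V E" and cg: "connected_graph V E"
    and hom: "graph_hom V E V E f" and li: "LI V E f"
  shows "graph_aut V E f"
proof -
  have fin: "finite V" using sg unfolding simple_graph_def by blast
  have into: "\<forall>v\<in>V. f v \<in> V" using hom unfolding graph_hom_def by blast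
  obtain n where n1: "n \<ge> 1" and idem: "\<forall>v\<in>V. (f^^n) ((f^^n) v) = (f^^n) v"
    using idem_power[OF fin into] by blast
  define g where "g = f^^n"
  have gh: "graph_hom V E V E g" unfolding g_def using hom_iter[OF hom] .
  have gl: "LI V E g" unfolding g_def using li_iter[OF hom li] .
  have gid: "\<forall>v\<in>V. g v = v"
  proof (rule ccontr)
    assume "\<not> (\<forall>v\<in>V. g v = v)"
    then obtain x where x: "x \<in> V" "g x \<noteq> x" by blast
    define F where "F = {v\<in>V. g v = v}"
    have gxV: "g x \<in> V" using gh x unfolding graph_hom_def by blast
    have "g x \<in> F" using idem x gxV unfolding F_def g_def by auto
    moreover have "x \<notin> F" using x F_def by simp
    moreover have "E\<^sup>*\<^sup>* (g x) x" using cg x gxV unfolding connected_graph_def by blast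
    ultimately obtain y z where yz: "E y z" "y \<in> F" "z \<notin> F" using crossing by metis
    have zV: "z \<in> V" and yV: "y \<in> V" using sg yz(1) unfolding simple_graph_def by blast+
    have gz: "g z \<noteq> z" using yz zV F_def by simp
    have gzV: "g z \<in> V" using gh zV unfolding graph_hom_def by blast
    have "E (g y) (g z)" using gh yV zV yz(1) unfolding graph_hom_def by blast
    hence "E y (g z)" using yz(2) F_def by simp
    hence "g z \<noteq> g (g z)" using gl yV zV gzV yz(1) gz unfolding LI_def by metis
    moreover have "g (g z) = g z" using idem zV g_def by simp
    ultimately show False by simp
  qed
  obtain m where nm: "n = Suc m" using n1 by (cases n) auto
  have bk: "(f^^m) (f v) = v" if "v \<in> V" for v
  proof -
    have "(f^^Suc m) v = v" using gid that unfolding g_def nm by blast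
    then show ?thesis by (simp only: funpow_Suc_right comp_apply)
  qed
  have inj: "inj_on f V" by (metis bk inj_onI)
  have "f ` V = V" using endo_inj_surj[OF fin _ inj] into by blast
  hence bij: "bij_betw f V V" using inj unfolding bij_betw_def by blast
  have hm: "graph_hom V E V E (f^^m)" using hom_iter[OF hom] .
  have "E u v \<longleftrightarrow> E (f u) (f v)" if "u \<in> V" "v \<in> V" for u v
  proof
    assume "E u v" then show "E (f u) (f v)" using hom that unfolding graph_hom_def by blast
  next
    assume "E (f u) (f v)"
    hence "E ((f^^m) (f u)) ((f^^m) (f v))" using hm into that unfolding graph_hom_def by blast
    then show "E u v" using bk that by simp
  qed
  then show ?thesis using bij unfolding graph_aut_def by blast
qed

definition gram :: "nat \<Rightarrow> ('a \<Rightarrow> nat \<Rightarrow> real) \<Rightarrow> 'a \<Rightarrow> 'a \<Rightarrow> real" where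
  "gram d x u v = (\<Sum>i<d. x u i * x v i)"

definition colf :: "bool \<Rightarrow> 'a set \<Rightarrow> ('a \<Rightarrow> 'a \<Rightarrow> bool) \<Rightarrow> real \<Rightarrow> nat \<Rightarrow> ('a \<Rightarrow> nat \<Rightarrow> real) \<Rightarrow> bool" where
  "colf s V E t d x \<longleftrightarrow> t \<ge> 2 \<and> (\<forall>v\<in>V. gram d x v v = 1)
     \<and> (\<forall>u\<in>V. \<forall>v\<in>V. E u v \<longrightarrow> (if s then gram d x u v = - 1 / (t - 1) else gram d x u v \<le> - 1 / (t - 1)))"

lemma vinner_map: "vinner (map f [0..<d]) (map g [0..<d]) = (\<Sum>i<d. f i * g i)"
  unfolding vinner_def by (intro sum.cong) auto

lemma vec_to_colf: "vec_coloring V E t d p \<Longrightarrow> colf False V E t d (\<lambda>v i. p v ! i)"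
  unfolding vec_coloring_def colf_def gram_def vinner_def by auto

lemma svec_to_colf: "strict_vec_coloring V E t d p \<Longrightarrow> colf True V E t d (\<lambda>v i. p v ! i)"
  unfolding strict_vec_coloring_def colf_def gram_def vinner_def by auto

lemma colf_to_vec: "colf False V E t d x \<Longrightarrow> vec_coloring V E t d (\<lambda>v. map (x v) [0..<d])"
  unfolding vec_coloring_def colf_def gram_def vinner_map by auto

lemma colf_to_svec: "colf True V E t d x \<Longrightarrow> strict_vec_coloring V E t d (\<lambda>v. map (x v) [0..<d])"
  unfolding strict_vec_coloring_def colf_def gram_def vinner_map by auto

lemma colf_gram: "colf s V E t d x \<Longrightarrow> (\<forall>u\<in>V. \<forall>v\<in>V. gram D y u v = gram d x u v) \<Longrightarrow> colf s V E t D y"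
  unfolding colf_def by auto

lemma ortho_exists:
  fixes x :: "'k \<Rightarrow> nat \<Rightarrow> real"
  assumes "finite K" "finite I" "card K < card I"
  shows "\<exists>w. (\<forall>i. i \<notin> I \<longrightarrow> w i = 0) \<and> (\<exists>i\<in>I. w i \<noteq> 0) \<and> (\<forall>k\<in>K. (\<Sum>i\<in>I. w i * x k i) = 0)"
  using assms
proof (induction K arbitrary: I x rule: finite_induct)
  case empty
  then obtain j where "j \<in> I" by fastforce
  then show ?case by (intro exI[of _ "\<lambda>i. if i = j then 1 else 0"]) auto
next
  case (insert k K)
  define a where "a = x k"
  show ?case
  proof (cases "\<exists>j\<in>I. a j \<noteq> 0")
    case False
    obtain w where w: "\<forall>i. i \<notin> I \<longrightarrow> w i = 0" "\<exists>i\<in>I. w i \<noteq> 0" "\<forall>k\<in>K. (\<Sum>i\<in>I. w i * x k i) = 0"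
      using insert.IH[of I x] insert.prems insert.hyps by auto
    have "(\<Sum>i\<in>I. w i * x k i) = 0" using False a_def by simp
    then show ?thesis using w by auto
  next
    case True
    then obtain j where j: "j \<in> I" "a j \<noteq> 0" by blast
    define x' where "x' m i = x m i - x m j / a j * a i" for m i
    have c: "card K < card (I - {j})" using insert.prems insert.hyps j by simp
    obtain w' where w': "\<forall>i. i \<notin> I - {j} \<longrightarrow> w' i = 0" "\<exists>i\<in>I - {j}. w' i \<noteq> 0"
       "\<forall>m\<in>K. (\<Sum>i\<in>I - {j}. w' i * x' m i) = 0"
      using insert.IH[OF _ c, of x'] insert.prems by auto
    define S where "S = (\<Sum>i\<in>I - {j}. w' i * a i)"
    define c where "c = - S / a j"
    define w where "w = w'(j := c)"
    have split: "(\<Sum>i\<in>I. w i * y i) = c * y j + (\<Sum>i\<in>I - {j}. w' i * y i)" for y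
    proof -
      have "(\<Sum>i\<in>I. w i * y i) = w j * y j + (\<Sum>i\<in>I - {j}. w i * y i)"
        using sum.remove[OF insert.prems(1) j(1)] by blast
      also have "(\<Sum>i\<in>I - {j}. w i * y i) = (\<Sum>i\<in>I - {j}. w' i * y i)"
        by (intro sum.cong) (auto simp: w_def)
      finally show ?thesis by (simp add: w_def)
    qed
    have o1: "(\<Sum>i\<in>I. w i * x k i) = 0"
      unfolding split using j unfolding c_def S_def a_def by (simp add: field_simps)
    have o2: "(\<Sum>i\<in>I. w i * x m i) = 0" if m: "m \<in> K" for m
    proof -
      have "0 = (\<Sum>i\<in>I - {j}. w' i * x' m i)" using w' m by simp
      also have "\<dots> = (\<Sum>i\<in>I - {j}. w' i * x m i) - x m j / a j * S"
        unfolding x'_def S_def by (simp add: algebra_simps sum_subtractf sum_distrib_left)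
      finally have "(\<Sum>i\<in>I - {j}. w' i * x m i) = x m j / a j * S" by simp
      then show ?thesis unfolding split c_def using j by (simp add: field_simps)
    qed
    have "\<forall>i. i \<notin> I \<longrightarrow> w i = 0" using w' j unfolding w_def by auto
    moreover have "\<exists>i\<in>I. w i \<noteq> 0" using w'(2) unfolding w_def by auto
    ultimately show ?thesis using o1 o2 by (intro exI[of _ w]) auto
  qed
qed


lemma sum_expand:
  fixes f g u :: "nat \<Rightarrow> real" and a b :: real
  shows "(\<Sum>i<d. (f i - a * u i) * (g i - b * u i)) =
   (\<Sum>i<d. f i * g i) - b * (\<Sum>i<d. f i * u i) - a * (\<Sum>i<d. u i * g i) + a * b * (\<Sum>i<d. u i * u i)"
proof -
  have "(\<Sum>i<d. (f i - a * u i) * (g i - b * u i)) =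
     (\<Sum>i<d. f i * g i - b * (f i * u i) - a * (u i * g i) + a * b * (u i * u i))"
    by (rule sum.cong[OF refl]) (simp add: algebra_simps)
  also have "\<dots> = (\<Sum>i<d. f i * g i) - (\<Sum>i<d. b * (f i * u i)) - (\<Sum>i<d. a * (u i * g i)) + (\<Sum>i<d. a * b * (u i * u i))"
    by (simp add: sum.distrib sum_subtractf)
  finally show ?thesis by (simp add: sum_distrib_left)
qed

lemma reduce_step:
  fixes x :: "'a \<Rightarrow> nat \<Rightarrow> real"
  assumes fin: "finite V" and dV: "card V < d"
  shows "\<exists>y. \<forall>u\<in>V. \<forall>v\<in>V. gram (d - 1) y u v = gram d x u v"
proof -
  obtain w where w: "\<forall>i. i \<notin> {..<d} \<longrightarrow> w i = 0" "\<exists>i\<in>{..<d}. w i \<noteq> 0"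
     "\<forall>k\<in>V. (\<Sum>i\<in>{..<d}. w i * x k i) = 0"
    using ortho_exists[OF fin _ , of "{..<d}" x] dV by auto
  define l where "l = d - 1"
  have dl: "d = Suc l" using dV l_def by simp
  define ip where "ip f g = (\<Sum>i<d. f i * g i)" for f g :: "nat \<Rightarrow> real"
  define sw where "sw = ip w w"
  have swpos: "sw > 0"
  proof -
    obtain i where i: "i < d" "w i \<noteq> 0" using w(2) by auto
    have "w i * w i \<le> sw" unfolding sw_def ip_def
      using member_le_sum[of i "{..<d}" "\<lambda>i. w i * w i"] i by auto
    moreover have "w i * w i > 0" using i by (cases "w i > 0") (auto simp: mult_neg_neg)
    ultimately show ?thesis by linarith
  qed
  define nw where "nw = sqrt sw"
  have nwpos: "nw > 0" using swpos nw_def by simp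
  have nw2: "nw * nw = sw" using swpos nw_def by simp
  define u where "u i = w i - (if i = l then nw else 0)" for i
  define uu where "uu = ip u u"
  define H where "H f i = f i - 2 * ip f u / uu * u i" for f i
  have ipH: "ip (H f) (H g) = ip f g" for f g
  proof -
    have "ip (H f) (H g) = ip f g - (2 * ip g u / uu) * ip f u - (2 * ip f u / uu) * ip u g
        + (2 * ip f u / uu) * (2 * ip g u / uu) * uu"
      unfolding H_def ip_def uu_def by (rule sum_expand)
    moreover have "ip u g = ip g u" unfolding ip_def by (simp add: mult.commute)
    ultimately show ?thesis by (cases "uu = 0") (auto simp: field_simps power2_eq_square)
  qed
  have ipdelta: "ip f (\<lambda>i. if i = l then c else 0) = f l * c" for f c
    unfolding ip_def using dl by (simp add: if_distrib cong: if_cong)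
  have ipfu: "ip f u = ip f w - nw * f l" for f
  proof -
    have "ip f u = ip f w - ip f (\<lambda>i. if i = l then nw else 0)"
      unfolding ip_def u_def by (simp add: algebra_simps sum_subtractf)
    then show ?thesis using ipdelta by simp
  qed
  have uuv: "uu = 2 * nw * (nw - w l)"
  proof -
    have "uu = ip u w - nw * u l" unfolding uu_def by (rule ipfu)
    moreover have "ip u w = sw - nw * w l" using ipfu[of w] unfolding sw_def ip_def
      by (simp add: mult.commute)
    ultimately show ?thesis using nw2 unfolding u_def by (simp add: algebra_simps)
  qed
  have Hl: "H f l = 0" if fw: "ip f w = 0" for f
  proof (cases "uu = 0")
    case True
    have "\<forall>i\<in>{..<d}. u i * u i = 0"
      using True unfolding uu_def ip_def by (subst sum_nonneg_eq_0_iff[symmetric]) auto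
    hence "ip f u = 0" unfolding ip_def by simp
    hence "f l = 0" using ipfu[of f] fw nwpos by simp
    then show ?thesis unfolding H_def using True by simp
  next
    case False
    have ne: "nw - w l \<noteq> 0" using False uuv by auto
    show ?thesis unfolding H_def ipfu fw uuv u_def using ne nwpos by (simp add: field_simps)
  qed
  define y where "y v = H (x v)" for v
  have "gram (d - 1) y u' v = gram d x u' v" if "u' \<in> V" "v \<in> V" for u' v
  proof -
    have o: "ip (x u') w = 0" "ip (x v) w = 0" using w(3) that unfolding ip_def
      by (auto simp: mult.commute)
    have "ip (y u') (y v) = ip (x u') (x v)" by (simp add: y_def ipH)
    hence "gram d x u' v = ip (y u') (y v)" unfolding gram_def ip_def by simp
    also have "\<dots> = gram l y u' v + y u' l * y v l" unfolding ip_def gram_def dl by simp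
    also have "\<dots> = gram l y u' v" unfolding y_def using Hl o by simp
    finally show ?thesis using l_def by simp
  qed
  then show ?thesis by blast
qed

lemma reduce:
  fixes x :: "'a \<Rightarrow> nat \<Rightarrow> real"
  assumes fin: "finite V"
  shows "\<exists>y. \<forall>u\<in>V. \<forall>v\<in>V. gram (card V) y u v = gram d x u v"
  using fin
proof (induction d arbitrary: x rule: less_induct)
  case (less d)
  show ?case
  proof (cases "d \<le> card V")
    case True
    define y where "y v i = (if i < d then x v i else 0)" for v i
    have "gram (card V) y u v = gram d x u v" for u v
    proof -
      have "gram (card V) y u v = (\<Sum>i<d. y u i * y v i)" unfolding gram_def
        by (rule sum.mono_neutral_right) (use True in \<open>auto simp: y_def\<close>)
      also have "\<dots> = gram d x u v" unfolding gram_def y_def by simp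
      finally show ?thesis .
    qed
    then show ?thesis by blast
  next
    case False
    obtain y where y: "\<forall>u\<in>V. \<forall>v\<in>V. gram (d - 1) y u v = gram d x u v"
      using reduce_step[OF fin, of d x] False by auto
    obtain z where "\<forall>u\<in>V. \<forall>v\<in>V. gram (card V) z u v = gram (d - 1) y u v"
      using less.IH[of "d - 1" y] False fin by auto
    then show ?thesis using y by auto
  qed
qed


lemma subseq_conv:
  fixes f :: "nat \<Rightarrow> 'j \<Rightarrow> real"
  assumes "finite J" "\<forall>j\<in>J. \<forall>k. \<bar>f k j\<bar> \<le> B"
  shows "\<exists>r. strict_mono r \<and> (\<forall>j\<in>J. convergent (\<lambda>k. f (r k) j))"
  using assms
proof (induction J rule: finite_induct)
  case empty
  then show ?case by (intro exI[of _ id]) (auto simp: strict_mono_def)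
next
  case (insert j J)
  obtain r where r: "strict_mono r" "\<forall>j\<in>J. convergent (\<lambda>k. f (r k) j)"
    using insert by auto
  obtain s where s: "strict_mono s" "monoseq (\<lambda>n. f (r (s n)) j)"
    using seq_monosub[of "\<lambda>n. f (r n) j"] by auto
  have "Bseq (\<lambda>n. f (r (s n)) j)" using insert.prems by (intro BseqI'[of _ B]) auto
  hence cj: "convergent (\<lambda>n. f (r (s n)) j)" using s Bseq_monoseq_convergent by blast
  have cJ: "convergent (\<lambda>k. f (r (s k)) i)" if "i \<in> J" for i
    using convergent_subseq_convergent[OF r(2)[rule_format, OF that] s(1)] by (simp add: o_def)
  have sm: "strict_mono (\<lambda>k. r (s k))" using strict_mono_o[OF r(1) s(1)] by (simp add: o_def)
  then show ?case using cj cJ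
    by (intro exI[of _ "\<lambda>k. r (s k)"]) auto
qed

lemma min_exists:
  fixes V :: "'a set"
  assumes fin: "finite V" and ne: "\<exists>t x. colf s V E t D x"
  shows "\<exists>T. (\<exists>x. colf s V E T D x) \<and> (\<forall>t. (\<exists>x. colf s V E t D x) \<longrightarrow> T \<le> t)"
proof -
  define S where "S = {t. \<exists>x. colf s V E t D x}"
  have Sne: "S \<noteq> {}" using ne S_def by auto
  have Sge: "t \<ge> 2" if "t \<in> S" for t using that unfolding S_def colf_def by auto
  have bdd: "bdd_below S" using Sge by (intro bdd_belowI[of _ 2]) auto
  define T where "T = Inf S"
  have low: "T \<le> t" if "t \<in> S" for t using cInf_lower[OF that bdd] T_def by simp
  have T2: "T \<ge> 2" unfolding T_def using Sne Sge by (intro cInf_greatest) auto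
  have "\<forall>k. \<exists>t. t \<in> S \<and> t < T + 1 / (real k + 1)"
  proof
    fix k :: nat
    have "Inf S < T + 1 / (real k + 1)" unfolding T_def by (simp add: add_pos_pos)
    then show "\<exists>t. t \<in> S \<and> t < T + 1 / (real k + 1)" using cInf_lessD[OF Sne] by blast
  qed
  then obtain tt where tt0: "\<forall>k. tt k \<in> S \<and> tt k < T + 1 / (real k + 1)" by (rule choice[THEN exE]) auto
  have tt: "\<And>k. tt k \<in> S" "\<And>k. tt k < T + 1 / (real k + 1)" using tt0 by auto
  have "\<forall>k. \<exists>x. colf s V E (tt k) D x" using tt unfolding S_def by auto
  then obtain xx where xx0: "\<forall>k. colf s V E (tt k) D (xx k)" by (rule choice[THEN exE]) auto
  have xx: "\<And>k. colf s V E (tt k) D (xx k)" using xx0 by auto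
  have ttlim: "tt \<longlonglongrightarrow> T"
  proof (rule real_tendsto_sandwich[of "\<lambda>_. T" tt sequentially "\<lambda>k. T + 1 / (real k + 1)"])
    show "\<forall>\<^sub>F n in sequentially. T \<le> tt n" using low tt by auto
    show "\<forall>\<^sub>F n in sequentially. tt n \<le> T + 1 / (real n + 1)" using tt by (auto intro!: always_eventually less_imp_le)
    show "(\<lambda>_. T) \<longlonglongrightarrow> T" by simp
    have "(\<lambda>n. 1 / (real n + 1)) \<longlonglongrightarrow> 0" using LIMSEQ_inverse_real_of_nat
      by (simp add: inverse_eq_divide add.commute)
    then show "(\<lambda>n. T + 1 / (real n + 1)) \<longlonglongrightarrow> T" using tendsto_add[of "\<lambda>_. T" T] by force
  qed
  have bnd: "\<forall>j\<in>V \<times> {..<D}. \<forall>k. \<bar>(\<lambda>k (v, i). xx k v i) k j\<bar> \<le> 1"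
  proof (intro ballI allI)
    fix j k assume j: "j \<in> V \<times> {..<D}"
    obtain v i where vi: "j = (v, i)" "v \<in> V" "i < D" using j by auto
    have "xx k v i * xx k v i \<le> gram D (xx k) v v" unfolding gram_def
      using member_le_sum[of i "{..<D}" "\<lambda>i. xx k v i * xx k v i"] vi by auto
    also have "\<dots> = 1" using xx[of k] vi unfolding colf_def by auto
    finally have "(xx k v i)^2 \<le> 1" by (simp add: power2_eq_square)
    then show "\<bar>(\<lambda>k (v, i). xx k v i) k j\<bar> \<le> 1" using vi abs_square_le_1 by auto
  qed
  obtain r where r: "strict_mono r" "\<forall>j\<in>V \<times> {..<D}. convergent (\<lambda>k. (\<lambda>k (v, i). xx k v i) (r k) j)"
    using subseq_conv[OF _ bnd] fin by blast
  define y where "y v i = lim (\<lambda>k. xx (r k) v i)" for v i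
  have ylim: "(\<lambda>k. xx (r k) v i) \<longlonglongrightarrow> y v i" if "v \<in> V" "i < D" for v i
    using r(2) that unfolding y_def by (auto simp: convergent_LIMSEQ_iff)
  have glim: "(\<lambda>k. gram D (xx (r k)) u v) \<longlonglongrightarrow> gram D y u v" if "u \<in> V" "v \<in> V" for u v
    unfolding gram_def using ylim that by (intro tendsto_sum tendsto_mult) auto
  have tlim: "(\<lambda>k. tt (r k)) \<longlonglongrightarrow> T" using LIMSEQ_subseq_LIMSEQ[OF ttlim r(1)] by (simp add: o_def)
  have blim: "(\<lambda>k. - 1 / (tt (r k) - 1)) \<longlonglongrightarrow> - 1 / (T - 1)"
    using T2 by (intro tendsto_intros tlim) auto
  have "colf s V E T D y"
    unfolding colf_def
  proof (intro conjI ballI impI)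
    show "2 \<le> T" by (rule T2)
  next
    fix v assume v: "v \<in> V"
    have "(\<lambda>k. gram D (xx (r k)) v v) = (\<lambda>k. 1)" using xx v unfolding colf_def by auto
    then show "gram D y v v = 1" using glim[OF v v] LIMSEQ_unique[OF _ tendsto_const] by metis
  next
    fix u v assume uv: "u \<in> V" "v \<in> V" "E u v"
    show "if s then gram D y u v = - 1 / (T - 1) else gram D y u v \<le> - 1 / (T - 1)"
    proof (cases s)
      case True
      have "(\<lambda>k. gram D (xx (r k)) u v) = (\<lambda>k. - 1 / (tt (r k) - 1))"
        using xx uv True unfolding colf_def by auto
      then show ?thesis using True glim[OF uv(1,2)] blim LIMSEQ_unique by metis
    next
      case False
      have "\<forall>k. gram D (xx (r k)) u v \<le> - 1 / (tt (r k) - 1)"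
        using xx uv False unfolding colf_def by auto
      then show ?thesis using False LIMSEQ_le[OF glim[OF uv(1,2)] blim] by auto
    qed
  qed
  then show ?thesis using low S_def by blast
qed

lemma delta_sum:
  assumes "a < N" "b < N"
  shows "(\<Sum>i<N. ((if i = a then 1 else 0) - c) * ((if i = b then 1 else 0) - (c::real)))
    = (if a = b then 1 else 0) - 2 * c + real N * c * c"
proof -
  have "(\<Sum>i<N. ((if i = a then 1 else 0) - c) * ((if i = b then 1 else 0) - (c::real)))
     = (\<Sum>i<N. (if i = a then (if a = b then 1 else 0) else 0) - (c * (if i = b then 1 else 0))
          - (c * (if i = a then 1 else 0)) + c * c)"
    by (intro sum.cong refl) (auto simp: algebra_simps)
  also have "\<dots> = (if a = b then 1 else 0) - 2 * c + real N * c * c"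
    using assms by (simp add: sum.distrib sum_subtractf sum_distrib_left[symmetric])
  finally show ?thesis .
qed

lemma simplex:
  fixes V :: "'a set"
  assumes fin: "finite V" and irr: "\<forall>v. \<not> E v v"
  shows "\<exists>t x. colf True V E t (card V + 2) x"
proof -
  define N where "N = card V + 2"
  obtain h where h: "bij_betw h V {0..<card V}" using ex_bij_betw_finite_nat[OF fin] by blast
  have hN: "h v < N" if "v \<in> V" for v using h that N_def bij_betwE by fastforce
  have hinj: "h u = h v \<Longrightarrow> u \<in> V \<Longrightarrow> v \<in> V \<Longrightarrow> u = v" for u v
    using h bij_betw_imp_inj_on inj_onD by metis
  have N2: "real N \<ge> 2" using N_def by simp
  define a where "a = sqrt (real N / (real N - 1))"
  have a2: "a * a = real N / (real N - 1)" unfolding a_def using N2 by simp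
  define x where "x v i = a * ((if i = h v then 1 else 0) - 1 / real N)" for v i
  have g: "gram N x u v = a * a * ((if h u = h v then 1 else 0) - 1 / real N)"
    if "u \<in> V" "v \<in> V" for u v
  proof -
    have "gram N x u v = a * a * (\<Sum>i<N. ((if i = h u then 1 else 0) - 1 / real N) *
              ((if i = h v then 1 else 0) - 1 / real N))"
      unfolding gram_def x_def sum_distrib_left by (intro sum.cong refl) (simp add: algebra_simps)
    also have "\<dots> = a * a * ((if h u = h v then 1 else 0) - 2 * (1 / real N) + real N * (1 / real N) * (1 / real N))"
      using delta_sum[OF hN[OF that(1)] hN[OF that(2)]] by simp
    also have "\<dots> = a * a * ((if h u = h v then 1 else 0) - 1 / real N)"
      using N2 by (simp add: field_simps)
    finally show ?thesis .
  qed
  have "colf True V E (real N) N x"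
    unfolding colf_def
  proof (intro conjI ballI impI)
    show "2 \<le> real N" by (rule N2)
  next
    fix v assume "v \<in> V"
    then have "gram N x v v = real N / (real N - 1) * (1 - 1 / real N)" using g a2 by simp
    then show "gram N x v v = 1" using N2 by (simp add: field_simps)
  next
    fix u v assume uv: "u \<in> V" "v \<in> V" "E u v"
    have "h u \<noteq> h v" using hinj uv irr by metis
    then show "if True then gram N x u v = - 1 / (real N - 1) else gram N x u v \<le> - 1 / (real N - 1)"
      using g[OF uv(1,2)] a2 N2 by (simp add: field_simps)
  qed
  then show ?thesis using N_def by blast
qed


lemma colf_reduce: "finite V \<Longrightarrow> colf s V E t d x \<Longrightarrow> \<exists>y. colf s V E t (card V) y"
  using reduce[of V d x] colf_gram by metis

lemma colf_weaken: "colf True V E t d x \<Longrightarrow> colf s V E t d x"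
  unfolding colf_def by (cases s) auto

lemma opt_exists_gen:
  assumes sg: "simple_graph V E"
  shows "\<exists>T. (\<exists>x. colf s V E T (card V) x) \<and> (\<forall>t. (\<exists>x. colf s V E t (card V) x) \<longrightarrow> T \<le> t)"
proof -
  have fin: "finite V" and irr: "\<forall>v. \<not> E v v" using sg unfolding simple_graph_def by auto
  obtain t0 x0 where "colf True V E t0 (card V + 2) x0" using simplex[of V E] fin irr by blast
  hence "colf s V E t0 (card V + 2) x0" by (rule colf_weaken)
  then obtain y where "colf s V E t0 (card V) y" using colf_reduce[OF fin] by blast
  then show ?thesis using min_exists[OF fin] by blast
qed

lemma opt_vec_exists:
  assumes sg: "simple_graph V E"
  shows "\<exists>d p. vec_coloring V E (chi_v V E) d p"
proof -
  have fin: "finite V" using sg unfolding simple_graph_def by auto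
  obtain T where T: "\<exists>x. colf False V E T (card V) x"
      "\<forall>t. (\<exists>x. colf False V E t (card V) x) \<longrightarrow> T \<le> t"
    using opt_exists_gen[OF sg, of False] by blast
  have eq: "(t \<ge> 2 \<and> (\<exists>d p. vec_coloring V E t d p)) \<longleftrightarrow> (\<exists>x. colf False V E t (card V) x)" for t
  proof
    assume "t \<ge> 2 \<and> (\<exists>d p. vec_coloring V E t d p)"
    then obtain d p where "vec_coloring V E t d p" by blast
    then show "\<exists>x. colf False V E t (card V) x" using vec_to_colf colf_reduce[OF fin] by blast
  next
    assume "\<exists>x. colf False V E t (card V) x"
    then obtain x where x: "colf False V E t (card V) x" by blast
    then have "t \<ge> 2" unfolding colf_def by simp
    then show "t \<ge> 2 \<and> (\<exists>d p. vec_coloring V E t d p)" using colf_to_vec[OF x] by blast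
  qed
  have "chi_v V E = T" unfolding chi_v_def
    by (rule Least_equality) (use T eq in auto)
  then show ?thesis using T(1) colf_to_vec by blast
qed

lemma opt_svec_exists:
  assumes sg: "simple_graph V E"
  shows "\<exists>d p. strict_vec_coloring V E (chi_sv V E) d p"
proof -
  have fin: "finite V" using sg unfolding simple_graph_def by auto
  obtain T where T: "\<exists>x. colf True V E T (card V) x"
      "\<forall>t. (\<exists>x. colf True V E t (card V) x) \<longrightarrow> T \<le> t"
    using opt_exists_gen[OF sg, of True] by blast
  have eq: "(t \<ge> 2 \<and> (\<exists>d p. strict_vec_coloring V E t d p)) \<longleftrightarrow> (\<exists>x. colf True V E t (card V) x)" for t
  proof
    assume "t \<ge> 2 \<and> (\<exists>d p. strict_vec_coloring V E t d p)"
    then obtain d p where "strict_vec_coloring V E t d p" by blast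
    then show "\<exists>x. colf True V E t (card V) x" using svec_to_colf colf_reduce[OF fin] by blast
  next
    assume "\<exists>x. colf True V E t (card V) x"
    then obtain x where x: "colf True V E t (card V) x" by blast
    then have "t \<ge> 2" unfolding colf_def by simp
    then show "t \<ge> 2 \<and> (\<exists>d p. strict_vec_coloring V E t d p)" using colf_to_svec[OF x] by blast
  qed
  have "chi_sv V E = T" unfolding chi_sv_def
    by (rule Least_equality) (use T eq in auto)
  then show ?thesis using T(1) colf_to_svec by blast
qed

lemma vec_comp: "vec_coloring V E t d p \<Longrightarrow> graph_hom V E V E f \<Longrightarrow> vec_coloring V E t d (p \<circ> f)"
  unfolding vec_coloring_def graph_hom_def by auto

lemma svec_comp: "strict_vec_coloring V E t d p \<Longrightarrow> graph_hom V E V E f \<Longrightarrow> strict_vec_coloring V E t d (p \<circ> f)"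
  unfolding strict_vec_coloring_def graph_hom_def by auto

lemma li_comp: "locally_injective V E (p \<circ> f) \<Longrightarrow> LI V E f"
  unfolding locally_injective_def LI_def by (metis comp_apply)

lemma unit_eq:
  assumes "length a = length b" "vinner a a = 1" "vinner b b = 1" "vinner a b = 1"
  shows "a = b"
proof -
  have "(\<Sum>i<length a. (a ! i - b ! i) * (a ! i - b ! i)) =
      (\<Sum>i<length a. a ! i * a ! i - 2 * (a ! i * b ! i) + b ! i * b ! i)"
    by (rule sum.cong[OF refl]) (simp add: algebra_simps)
  also have "\<dots> = (\<Sum>i<length a. a ! i * a ! i) - 2 * (\<Sum>i<length a. a ! i * b ! i) + (\<Sum>i<length a. b ! i * b ! i)"
    by (simp add: sum.distrib sum_subtractf sum_distrib_left)
  also have "\<dots> = vinner a a - 2 * vinner a b + vinner b b"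
    unfolding vinner_def using assms(1) by simp
  also have "\<dots> = 0" using assms by simp
  finally have "\<forall>i\<in>{..<length a}. (a ! i - b ! i) * (a ! i - b ! i) = 0"
    by (subst sum_nonneg_eq_0_iff[symmetric]) auto
  then show ?thesis using assms(1) by (intro nth_equalityI) auto
qed

theorem theorem4p3:
  fixes V :: "'a set" and E :: "'a \<Rightarrow> 'a \<Rightarrow> bool"
  assumes "simple_graph V E" and "connected_graph V E"
  shows "((\<forall>d p. optimal_vec_coloring V E d p \<longrightarrow> locally_injective V E p) \<longrightarrow> is_core V E)
       \<and> ((\<forall>d p. optimal_strict_vec_coloring V E d p \<longrightarrow> locally_injective V E p) \<longrightarrow> is_core V E)
       \<and> ((uniquely_vec_colorable V E \<and>
            (\<exists>d p. optimal_vec_coloring V E d p \<and> locally_injective V E p)) \<longrightarrow> is_core V E)"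
proof (intro conjI impI)
  assume h: "\<forall>d p. optimal_vec_coloring V E d p \<longrightarrow> locally_injective V E p"
  obtain d p where p: "vec_coloring V E (chi_v V E) d p" using opt_vec_exists[OF assms(1)] by blast
  show "is_core V E" unfolding is_core_def
  proof (intro allI impI)
    fix f assume f: "graph_hom V E V E f"
    have "locally_injective V E (p \<circ> f)"
      using h vec_comp[OF p f] unfolding optimal_vec_coloring_def by blast
    then show "graph_aut V E f" using li_hom_aut[OF assms f] li_comp by blast
  qed
next
  assume h: "\<forall>d p. optimal_strict_vec_coloring V E d p \<longrightarrow> locally_injective V E p"
  obtain d p where p: "strict_vec_coloring V E (chi_sv V E) d p" using opt_svec_exists[OF assms(1)] by blast
  show "is_core V E" unfolding is_core_def
  proof (intro allI impI)
    fix f assume f: "graph_hom V E V E f"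
    have "locally_injective V E (p \<circ> f)"
      using h svec_comp[OF p f] unfolding optimal_strict_vec_coloring_def by blast
    then show "graph_aut V E f" using li_hom_aut[OF assms f] li_comp by blast
  qed
next
  assume h: "uniquely_vec_colorable V E \<and> (\<exists>d p. optimal_vec_coloring V E d p \<and> locally_injective V E p)"
  then obtain d p where p: "optimal_vec_coloring V E d p" and lp: "locally_injective V E p" by blast
  have pc: "vec_coloring V E (chi_v V E) d p" using p unfolding optimal_vec_coloring_def .
  show "is_core V E" unfolding is_core_def
  proof (intro allI impI)
    fix f assume f: "graph_hom V E V E f"
    have q: "optimal_vec_coloring V E d (p \<circ> f)"
      using vec_comp[OF pc f] unfolding optimal_vec_coloring_def .
    have gr: "\<forall>u\<in>V. \<forall>v\<in>V. vinner (p u) (p v) = vinner (p (f u)) (p (f v))"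
    proof (intro ballI)
      fix u v assume uv: "u \<in> V" "v \<in> V"
      have "uniquely_vec_colorable V E" using h by blast
      then have "vinner (p u) (p v) = vinner ((p \<circ> f) u) ((p \<circ> f) v)"
        unfolding uniquely_vec_colorable_def using p q uv by blast
      then show "vinner (p u) (p v) = vinner (p (f u)) (p (f v))" by simp
    qed
    have "LI V E f" unfolding LI_def
    proof (intro ballI impI)
      fix w u v assume a: "w \<in> V" "u \<in> V" "v \<in> V" "E w u" "E w v" "u \<noteq> v"
      show "f u \<noteq> f v"
      proof
        assume fe: "f u = f v"
        have fuV: "f u \<in> V" using f a unfolding graph_hom_def by blast
        have "vinner (p u) (p v) = vinner (p (f u)) (p (f u))" using gr a fe by simp
        also have "\<dots> = 1" using pc fuV unfolding vec_coloring_def by blast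
        finally have i1: "vinner (p u) (p v) = 1" .
        have "length (p u) = d" "length (p v) = d" "vinner (p u) (p u) = 1" "vinner (p v) (p v) = 1"
          using pc a unfolding vec_coloring_def by auto
        then have "p u = p v" using unit_eq i1 by simp
        then show False using lp a unfolding locally_injective_def by blast
      qed
    qed
    then show "graph_aut V E f" using li_hom_aut[OF assms f] by blast
  qed
qed

end
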